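(* A conformal almost Hermitian structure $(M,J,c)$ of dimension $n\ge4$ is nearly Kähler Weyl, i.e. $(\nabla^c_XJ)X=0$ for all vector fields $X$, if and only if $\nabla^c$ and $\nabla^{gc}$ have the same geodesics. In particular, in that case they are projectively equivalent.
   Context: Conformal almost Hermitian: $J$ with $J^2=-\mathrm{id}$, $c$ a conformal class of Riemannian metrics with $J$ orthogonal. For $g\in c$ with Levi-Civita $\nabla$, $B_a:=\frac1{n-2}J^c{}_b\nabla_cJ^b{}_a$ and $\nabla^c_aY^b:=\nabla_aY^b-B_aY^b+B^bY_a-B_cY^c\delta^b_a$ (independent of $g\in c$). $G^c(X,Y):=-\frac12J(\nabla^c_YJ)X$, $\nabla^{gc}_XY:=\nabla^c_XY+G^c(Y,X)$. Geodesics of a connection $D$ are curves with $D_{\dot\gamma}\dot\gamma=0$. *)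

theory Defs
  imports "HOL-Analysis.Analysis"
begin

text \<open>Local (coordinate) model: an open set U of R^n, points real^'n,
 endomorphism/metric fields as matrix-valued maps real^'n \<Rightarrow> real^'n^'n.
 A linear connection D on U is encoded by its Christoffel map Gam, i.e.
 D_X Y (p) = DY(p) X + Gam p X (Y p).\<close>

fun iter_dd :: "('a::real_normed_vector) list \<Rightarrow> ('a \<Rightarrow> 'b::real_normed_vector) \<Rightarrow> 'a \<Rightarrow> 'b" where
  "iter_dd [] f = f"
| "iter_dd (v # vs) f = (\<lambda>p. frechet_derivative (iter_dd vs f) (at p) v)"

definition smooth_on :: "('a::real_normed_vector) set \<Rightarrow> ('a \<Rightarrow> 'b::real_normed_vector) \<Rightarrow> bool" where
  "smooth_on U f \<longleftrightarrow> (\<forall>vs. \<forall>p\<in>U. iter_dd vs f differentiable (at p))"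

definition gip :: "(real^'n \<Rightarrow> real^'n^'n) \<Rightarrow> real^'n \<Rightarrow> real^'n \<Rightarrow> real^'n \<Rightarrow> real" where
  "gip g p X Y = X \<bullet> (g p *v Y)"

text \<open>Levi-Civita connection of g (Koszul formula in coordinates).\<close>
definition LC :: "(real^'n \<Rightarrow> real^'n^'n) \<Rightarrow> real^'n \<Rightarrow> real^'n \<Rightarrow> real^'n \<Rightarrow> real^'n" where
  "LC g p X Y = matrix_inv (g p) *v (\<chi> k. (1/2) *
      (  Y \<bullet> (frechet_derivative g (at p) X *v axis k 1)
       + X \<bullet> (frechet_derivative g (at p) Y *v axis k 1)
       - X \<bullet> (frechet_derivative g (at p) (axis k 1) *v Y)))"

definition covJ :: "(real^'n \<Rightarrow> real^'n \<Rightarrow> real^'n \<Rightarrow> real^'n) \<Rightarrow> (real^'n \<Rightarrow> real^'n^'n)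
    \<Rightarrow> real^'n \<Rightarrow> real^'n \<Rightarrow> real^'n \<Rightarrow> real^'n" where
  "covJ Gam J p Z W = frechet_derivative J (at p) Z *v W + Gam p Z (J p *v W) - J p *v Gam p Z W"

text \<open>B_a = 1/(n-2) J^c_b nabla_c J^b_a, i.e. B(X) = 1/(n-2) tr(Z \<mapsto> J (nabla_Z J) X).\<close>
definition Bform :: "(real^'n \<Rightarrow> real^'n^'n) \<Rightarrow> (real^'n \<Rightarrow> real^'n^'n) \<Rightarrow> real^'n \<Rightarrow> real^'n \<Rightarrow> real" where
  "Bform g J p X = (1 / (real CARD('n) - 2)) *
      (\<Sum>c\<in>UNIV. (J p *v covJ (LC g) J p (axis c 1) X) $ c)"

definition Bsharp :: "(real^'n \<Rightarrow> real^'n^'n) \<Rightarrow> (real^'n \<Rightarrow> real^'n^'n) \<Rightarrow> real^'n \<Rightarrow> real^'n" where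
  "Bsharp g J p = matrix_inv (g p) *v (\<chi> a. Bform g J p (axis a 1))"

definition Gam_c :: "(real^'n \<Rightarrow> real^'n^'n) \<Rightarrow> (real^'n \<Rightarrow> real^'n^'n) \<Rightarrow> real^'n \<Rightarrow> real^'n \<Rightarrow> real^'n \<Rightarrow> real^'n" where
  "Gam_c g J p X Y = LC g p X Y - Bform g J p X *\<^sub>R Y + gip g p X Y *\<^sub>R Bsharp g J p - Bform g J p Y *\<^sub>R X"

definition Gc :: "(real^'n \<Rightarrow> real^'n^'n) \<Rightarrow> (real^'n \<Rightarrow> real^'n^'n) \<Rightarrow> real^'n \<Rightarrow> real^'n \<Rightarrow> real^'n \<Rightarrow> real^'n" where
  "Gc g J p X Y = - ((1/2) *\<^sub>R (J p *v covJ (Gam_c g J) J p Y X))"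

definition Gam_gc :: "(real^'n \<Rightarrow> real^'n^'n) \<Rightarrow> (real^'n \<Rightarrow> real^'n^'n) \<Rightarrow> real^'n \<Rightarrow> real^'n \<Rightarrow> real^'n \<Rightarrow> real^'n" where
  "Gam_gc g J p X Y = Gam_c g J p X Y + Gc g J p Y X"

definition geodesic :: "(real^'n \<Rightarrow> real^'n \<Rightarrow> real^'n \<Rightarrow> real^'n) \<Rightarrow> (real^'n) set
    \<Rightarrow> real set \<Rightarrow> (real \<Rightarrow> real^'n) \<Rightarrow> bool" where
  "geodesic Gam U I \<gamma> \<longleftrightarrow>
     (\<forall>t\<in>I. \<gamma> t \<in> U \<and> \<gamma> differentiable (at t)
        \<and> (\<lambda>s. vector_derivative \<gamma> (at s)) differentiable (at t)
        \<and> vector_derivative (\<lambda>s. vector_derivative \<gamma> (at s)) (at t)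
            + Gam (\<gamma> t) (vector_derivative \<gamma> (at t)) (vector_derivative \<gamma> (at t)) = 0)"

definition same_geodesics where
  "same_geodesics Gam1 Gam2 U \<longleftrightarrow>
     (\<forall>I \<gamma>. open I \<and> is_interval I \<longrightarrow> (geodesic Gam1 U I \<gamma> \<longleftrightarrow> geodesic Gam2 U I \<gamma>))"

text \<open>Projective equivalence (for connections possibly with torsion): the symmetric
 parts differ by rho(X) Y + rho(Y) X for a 1-form rho.\<close>
definition proj_equiv where
  "proj_equiv Gam1 Gam2 U \<longleftrightarrow>
     (\<exists>\<rho> :: real^'n \<Rightarrow> real^'n \<Rightarrow> real. \<forall>p\<in>U. linear (\<rho> p) \<and>
        (\<forall>X Y. (1/2) *\<^sub>R (Gam2 p X Y + Gam2 p Y X) - (1/2) *\<^sub>R (Gam1 p X Y + Gam1 p Y X)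
               = \<rho> p X *\<^sub>R Y + \<rho> p Y *\<^sub>R X))"

definition nearly_kaehler_weyl where
  "nearly_kaehler_weyl g J U \<longleftrightarrow> (\<forall>p\<in>U. \<forall>X. covJ (Gam_c g J) J p X X = 0)"

definition conf_almost_hermitian :: "(real^'n) set \<Rightarrow> (real^'n \<Rightarrow> real^'n^'n) \<Rightarrow> (real^'n \<Rightarrow> real^'n^'n) \<Rightarrow> bool" where
  "conf_almost_hermitian U g J \<longleftrightarrow> open U \<and> smooth_on U g \<and> smooth_on U J \<and>
     (\<forall>p\<in>U. transpose (g p) = g p \<and> (\<forall>X. X \<noteq> 0 \<longrightarrow> gip g p X X > 0)
        \<and> J p ** J p = - mat 1
        \<and> (\<forall>X Y. gip g p (J p *v X) (J p *v Y) = gip g p X Y))"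

end

theory Submission
  imports Defs
begin


lemma int_bound:
  fixes f :: "real \<Rightarrow> 'a::euclidean_space"
  assumes "continuous_on {a..b} f" "a \<le> u" "u \<le> b" "0 \<le> B"
    "\<And>x. x \<in> {a..b} \<Longrightarrow> norm (f x) \<le> B"
  shows "norm (integral {a..u} f) \<le> B * (b - a)"
proof -
  have "f integrable_on {a..u}"
    using assms by (intro integrable_continuous_real continuous_on_subset[OF assms(1)]) auto
  then have "norm (integral {a..u} f) \<le> B * (u - a)"
    using integrable_bound[of B f a u] assms by auto
  also have "\<dots> \<le> B * (b - a)" using assms by (auto intro!: mult_left_mono)
  finally show ?thesis by simp
qed

lemma ode_exists:
  fixes H :: "'a::euclidean_space \<Rightarrow> 'a"
  assumes r: "r > 0" and L: "L-lipschitz_on (cball z0 r) H"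
    and M: "\<And>z. z \<in> cball z0 r \<Longrightarrow> norm (H z) \<le> M"
  shows "\<exists>e>0. \<exists>z. z 0 = z0 \<and> (\<forall>t\<in>{-e<..<e}. z t \<in> cball z0 r \<and> (z has_vector_derivative H (z t)) (at t))"
proof -
  have M0: "M \<ge> 0" using M[of z0] r by (auto intro: order_trans[OF norm_ge_zero])
  have L0: "L \<ge> 0" using L lipschitz_on_nonneg by blast
  have Hc: "continuous_on (cball z0 r) H" using L by (rule lipschitz_on_continuous_on)
  define e where "e = min 1 (min (r / (4 * (M + 1))) (1 / (8 * (L + 1))))"
  have e0: "e > 0" using r M0 L0 by (auto simp: e_def)
  have eM: "4 * e * M \<le> r"
  proof -
    have "e \<le> r / (4 * (M + 1))" by (simp add: e_def)
    then have "4 * e * (M+1) \<le> r" using M0 by (simp add: field_simps)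
    moreover have "e * M \<le> e * (M+1)" using e0 by simp
    ultimately show ?thesis by linarith
  qed
  have eL: "4 * e * L \<le> 1/2"
  proof -
    have "e \<le> 1 / (8 * (L + 1))" by (simp add: e_def)
    then have "8 * e * (L+1) \<le> 1" using L0 by (simp add: field_simps)
    moreover have "e * L \<le> e * (L+1)" using e0 by simp
    ultimately show ?thesis by linarith
  qed
  define clamp where "clamp t = max (-e) (min e t)" for t :: real
  have clamp_in: "clamp t \<in> {-e..e}" for t using e0 by (auto simp: clamp_def)
  have clamp_cont: "continuous_on UNIV clamp" unfolding clamp_def by (intro continuous_intros)
  define S where "S = PiC UNIV (\<lambda>_::real. cball z0 r)"
  have S_mem: "\<phi> \<in> S \<longleftrightarrow> (\<forall>t. apply_bcontfun \<phi> t \<in> cball z0 r)" for \<phi>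
    by (auto simp: S_def mem_PiC_iff)
  have hcont: "continuous_on {-e..e} (\<lambda>s. H (apply_bcontfun \<phi> s))" if "\<phi> \<in> S" for \<phi>
    using that unfolding S_mem
    by (intro continuous_on_compose2[OF Hc]) auto
  have hint: "(\<lambda>s. H (apply_bcontfun \<phi> s)) integrable_on {-e..u}" if "\<phi> \<in> S" "u \<le> e" for \<phi> u
    by (rule integrable_continuous_real, rule continuous_on_subset[OF hcont[OF that(1)]]) (use that in auto)
  define Tf where "Tf \<phi> = (\<lambda>t. z0 + (integral {-e..clamp t} (\<lambda>s. H (apply_bcontfun \<phi> s))
       - integral {-e..0} (\<lambda>s. H (apply_bcontfun \<phi> s))))" for \<phi> :: "real \<Rightarrow>\<^sub>C 'a"
  have ibound: "norm (integral {-e..u} (\<lambda>s. H (apply_bcontfun \<phi> s))) \<le> M * (2*e)"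
    if "\<phi> \<in> S" "u \<in> {-e..e}" for \<phi> u
    using int_bound[OF hcont[OF that(1)], of u M] that M0 M S_mem by auto
  have Tf_ball: "Tf \<phi> t \<in> cball z0 r" if "\<phi> \<in> S" for \<phi> t
  proof -
    have "norm (integral {-e..clamp t} (\<lambda>s. H (apply_bcontfun \<phi> s))
       - integral {-e..0} (\<lambda>s. H (apply_bcontfun \<phi> s))) \<le> M*(2*e) + M*(2*e)"
      by (rule order_trans[OF norm_triangle_ineq4], rule add_mono; rule ibound) (use that clamp_in e0 in auto)
    then show ?thesis using eM by (auto simp: Tf_def dist_norm norm_minus_commute mult_ac)
  qed
  have Tf_bc: "Tf \<phi> \<in> bcontfun" if "\<phi> \<in> S" for \<phi>
  proof (rule bcontfun_normI)
    have "continuous_on UNIV (\<lambda>t. integral {-e..clamp t} (\<lambda>s. H (apply_bcontfun \<phi> s)))"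
      by (rule continuous_on_compose2[OF indefinite_integral_continuous_1[OF hint[OF that order_refl]] clamp_cont])
        (use clamp_in in auto)
    then show "continuous_on UNIV (Tf \<phi>)" unfolding Tf_def by (intro continuous_intros)
    show "norm (Tf \<phi> t) \<le> norm z0 + r" for t
      using Tf_ball[OF that, of t] norm_triangle_sub[of "Tf \<phi> t" z0] by (auto simp: dist_norm norm_minus_commute)
  qed
  define T where "T \<phi> = Bcontfun (Tf \<phi>)" for \<phi>
  have T_app: "apply_bcontfun (T \<phi>) = Tf \<phi>" if "\<phi> \<in> S" for \<phi>
    using Tf_bc[OF that] by (simp add: T_def Bcontfun_inverse)
  have "\<exists>!\<phi>\<in>S. T \<phi> = \<phi>"
  proof (rule Banach_fix[where c="1/2"])
    have "closed S" unfolding S_def by (rule closed_PiC) auto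
    then show "complete S" by (rule complete_eq_closed[THEN iffD2])
    show "S \<noteq> {}" using S_mem[of "const_bcontfun z0"] r by (auto simp: const_bcontfun.rep_eq)
    show "T ` S \<subseteq> S"
    proof
      fix \<psi> assume "\<psi> \<in> T ` S"
      then obtain \<phi> where ph: "\<phi> \<in> S" "\<psi> = T \<phi>" by blast
      have "\<forall>t. apply_bcontfun (T \<phi>) t \<in> cball z0 r" using T_app[OF ph(1)] Tf_ball[OF ph(1)] by simp
      then show "\<psi> \<in> S" using S_mem ph(2) by blast
    qed
    fix \<phi> \<psi> assume p: "\<phi> \<in> S" and q: "\<psi> \<in> S"
    let ?d = "dist \<phi> \<psi>"
    have hd: "norm (H (apply_bcontfun \<phi> s) - H (apply_bcontfun \<psi> s)) \<le> L * ?d" for s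
    proof -
      have "norm (H (apply_bcontfun \<phi> s) - H (apply_bcontfun \<psi> s)) \<le> L * norm (apply_bcontfun \<phi> s - apply_bcontfun \<psi> s)"
        by (rule lipschitz_on_normD[OF L]) (use p q S_mem in auto)
      also have "\<dots> \<le> L * ?d" using dist_bounded[of \<phi> s \<psi>] L0 by (auto simp: dist_norm intro: mult_left_mono)
      finally show ?thesis .
    qed
    have ib2: "norm (integral {-e..u} (\<lambda>s. H (apply_bcontfun \<phi> s)) - integral {-e..u} (\<lambda>s. H (apply_bcontfun \<psi> s))) \<le> L * ?d * (2*e)"
      if "u \<in> {-e..e}" for u
    proof -
      have "norm (integral {-e..u} (\<lambda>s. H (apply_bcontfun \<phi> s) - H (apply_bcontfun \<psi> s))) \<le> L * ?d * (e - - e)"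
        by (rule int_bound) (use that L0 hd in \<open>auto intro!: continuous_intros hcont p q\<close>)
      moreover have "integral {-e..u} (\<lambda>s. H (apply_bcontfun \<phi> s) - H (apply_bcontfun \<psi> s)) =
          integral {-e..u} (\<lambda>s. H (apply_bcontfun \<phi> s)) - integral {-e..u} (\<lambda>s. H (apply_bcontfun \<psi> s))"
        by (rule integral_diff; rule hint) (use p q that in auto)
      ultimately show ?thesis by simp
    qed
    show "dist (T \<phi>) (T \<psi>) \<le> 1/2 * ?d"
    proof (rule dist_bound)
      fix t
      have "dist (T \<phi> t) (T \<psi> t) = norm (
         (integral {-e..clamp t} (\<lambda>s. H (apply_bcontfun \<phi> s)) - integral {-e..clamp t} (\<lambda>s. H (apply_bcontfun \<psi> s)))
         - (integral {-e..0} (\<lambda>s. H (apply_bcontfun \<phi> s)) - integral {-e..0} (\<lambda>s. H (apply_bcontfun \<psi> s))))"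
        using T_app[OF p] T_app[OF q] by (simp add: Tf_def dist_norm algebra_simps)
      also have "\<dots> \<le> L * ?d * (2*e) + L * ?d * (2*e)"
        by (rule order_trans[OF norm_triangle_ineq4], rule add_mono; rule ib2) (use clamp_in e0 in auto)
      also have "\<dots> = (4*e*L) * ?d" by simp
      also have "\<dots> \<le> 1/2 * ?d" using eL by (intro mult_right_mono) auto
      finally show "dist (T \<phi> t) (T \<psi> t) \<le> 1/2 * ?d" .
    qed
  qed auto
  then obtain \<phi> where p: "\<phi> \<in> S" and fx: "T \<phi> = \<phi>" by blast
  have eq: "apply_bcontfun \<phi> t = Tf \<phi> t" for t using T_app[OF p] fx by metis
  show ?thesis
  proof (intro exI conjI ballI)
    show "e > 0" by (rule e0)
    have "Tf \<phi> 0 = z0" using e0 by (simp add: Tf_def clamp_def)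
    then show "apply_bcontfun \<phi> 0 = z0" using eq[of 0] by simp
    fix t assume t: "t \<in> {-e<..<e}"
    show "apply_bcontfun \<phi> t \<in> cball z0 r" using p S_mem by auto
    have tI: "t \<in> {-e..e}" using t by auto
    have d1: "((\<lambda>u. integral {-e..u} (\<lambda>s. H (apply_bcontfun \<phi> s))) has_vector_derivative H (apply_bcontfun \<phi> t)) (at t within {-e..e})"
      by (rule integral_has_vector_derivative[OF hcont[OF p] tI])
    have sub: "{-e<..<e} \<subseteq> {-e..e}" by auto
    have d15: "((\<lambda>u. integral {-e..u} (\<lambda>s. H (apply_bcontfun \<phi> s))) has_vector_derivative H (apply_bcontfun \<phi> t)) (at t within {-e<..<e})"
      by (rule has_vector_derivative_within_subset[OF d1 sub])
    have ato: "at t within {-e<..<e} = at t" by (rule at_within_open[OF t]) simp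
    have d2: "((\<lambda>u. integral {-e..u} (\<lambda>s. H (apply_bcontfun \<phi> s))) has_vector_derivative H (apply_bcontfun \<phi> t)) (at t)"
      using d15 unfolding ato .
    have d3: "((\<lambda>u. z0 + (integral {-e..u} (\<lambda>s. H (apply_bcontfun \<phi> s)) - integral {-e..0} (\<lambda>s. H (apply_bcontfun \<phi> s)))) has_vector_derivative H (apply_bcontfun \<phi> t)) (at t)"
      using has_vector_derivative_add[OF has_vector_derivative_const[of z0] has_vector_derivative_diff[OF d2 has_vector_derivative_const]] by simp
    show "(apply_bcontfun \<phi> has_vector_derivative H (apply_bcontfun \<phi> t)) (at t)"
    proof (rule has_vector_derivative_transform_within_open[OF d3, of "{-e<..<e}"])
      show "open {-e<..<e}" by simp
      show "t \<in> {-e<..<e}" by (rule t)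
      fix u assume "u \<in> {-e<..<e}"
      then have "clamp u = u" by (simp add: clamp_def)
      then have "Tf \<phi> u = z0 + (integral {-e..u} (\<lambda>s. H (apply_bcontfun \<phi> s)) - integral {-e..0} (\<lambda>s. H (apply_bcontfun \<phi> s)))"
        by (simp add: Tf_def)
      then show "z0 + (integral {-e..u} (\<lambda>s. H (apply_bcontfun \<phi> s)) - integral {-e..0} (\<lambda>s. H (apply_bcontfun \<phi> s))) = apply_bcontfun \<phi> u"
        using eq[of u] by simp
    qed
  qed
qed



definition LB :: "'a::metric_space set \<Rightarrow> ('a \<Rightarrow> 'b::real_normed_vector) \<Rightarrow> bool" where
  "LB S f \<longleftrightarrow> (\<exists>B. \<forall>z\<in>S. norm (f z) \<le> B) \<and> (\<exists>L. L-lipschitz_on S f)"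

lemma LBI: "(\<And>z. z\<in>S \<Longrightarrow> norm (f z) \<le> B) \<Longrightarrow> L-lipschitz_on S f \<Longrightarrow> LB S f"
  unfolding LB_def by blast

lemma LBE:
  assumes "LB S f"
  obtains B L where "\<And>z. z\<in>S \<Longrightarrow> norm (f z) \<le> B" "B \<ge> 0" "L-lipschitz_on S f"
proof -
  from assms obtain B L where "\<forall>z\<in>S. norm (f z) \<le> B" "L-lipschitz_on S f" unfolding LB_def by blast
  then show ?thesis using that[of "max B 0" L] by force
qed

lemma LB_const: "LB S (\<lambda>z. c)"
  by (rule LBI[where B="norm c" and L=0]) (auto intro: lipschitz_on_constant)

lemma LB_add: "LB S f \<Longrightarrow> LB S g \<Longrightarrow> LB S (\<lambda>z. f z + g z)"
  by (elim LBE, rule LBI, rule order_trans[OF norm_triangle_ineq], rule add_mono, assumption+,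
      rule lipschitz_on_add; assumption)

lemma LB_minus: "LB S f \<Longrightarrow> LB S (\<lambda>z. - f z)"
  by (elim LBE, rule LBI) auto

lemma LB_diff: "LB S f \<Longrightarrow> LB S g \<Longrightarrow> LB S (\<lambda>z. f z - g z)"
  using LB_add[of S f "\<lambda>z. - g z"] LB_minus[of S g] by simp

lemma LB_cong: "LB S f \<Longrightarrow> (\<And>z. z \<in> S \<Longrightarrow> f z = g z) \<Longrightarrow> LB S g"
  unfolding LB_def lipschitz_on_def by metis

lemma LB_subset: "LB S f \<Longrightarrow> T \<subseteq> S \<Longrightarrow> LB T f"
  unfolding LB_def using lipschitz_on_subset by blast

lemma LB_bilin:
  fixes prod :: "'b::real_normed_vector \<Rightarrow> 'c::real_normed_vector \<Rightarrow> 'd::real_normed_vector"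
    and f :: "'a::metric_space \<Rightarrow> 'b" and g :: "'a \<Rightarrow> 'c"
  assumes bb: "bounded_bilinear prod" and f: "LB S f" and g: "LB S g"
  shows "LB S (\<lambda>z. prod (f z) (g z))"
proof -
  obtain Bf Lf where bf: "\<And>z. z\<in>S \<Longrightarrow> norm (f z) \<le> Bf" "Bf \<ge> 0" and lf: "Lf-lipschitz_on S f"
    by (rule LBE[OF f]) blast
  obtain Bg Lg where bg: "\<And>z. z\<in>S \<Longrightarrow> norm (g z) \<le> Bg" "Bg \<ge> 0" and lg: "Lg-lipschitz_on S g"
    by (rule LBE[OF g]) blast
  obtain K where K: "\<And>a b. norm (prod a b) \<le> norm a * norm b * K" "K > 0"
    using bounded_bilinear.pos_bounded[OF bb] by blast
  have Lf0: "Lf \<ge> 0" using lf lipschitz_on_nonneg by blast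
  have Lg0: "Lg \<ge> 0" using lg lipschitz_on_nonneg by blast
  show ?thesis
  proof (rule LBI)
    fix z assume z: "z \<in> S"
    have "norm (prod (f z) (g z)) \<le> norm (f z) * norm (g z) * K" by (rule K)
    also have "\<dots> \<le> Bf * Bg * K"
      using bf bg(1)[OF z] K(2) z by (intro mult_right_mono mult_mono) auto
    finally show "norm (prod (f z) (g z)) \<le> Bf * Bg * K" .
  next
    show "(K * (Lf * Bg + Bf * Lg))-lipschitz_on S (\<lambda>z. prod (f z) (g z))"
    proof (rule lipschitz_onI)
      fix x y assume x: "x \<in> S" and y: "y \<in> S"
      have eq: "prod (f x) (g x) - prod (f y) (g y) = prod (f x - f y) (g x) + prod (f y) (g x - g y)"
        by (simp add: bounded_bilinear.diff_left[OF bb] bounded_bilinear.diff_right[OF bb])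
      have n1: "norm (f x - f y) \<le> Lf * dist x y" using lipschitz_onD[OF lf x y] by (simp add: dist_norm)
      have n2: "norm (g x - g y) \<le> Lg * dist x y" using lipschitz_onD[OF lg x y] by (simp add: dist_norm)
      have "dist (prod (f x) (g x)) (prod (f y) (g y)) \<le> norm (prod (f x - f y) (g x)) + norm (prod (f y) (g x - g y))"
        unfolding dist_norm eq by (rule norm_triangle_ineq)
      also have "\<dots> \<le> norm (f x - f y) * norm (g x) * K + norm (f y) * norm (g x - g y) * K"
        by (intro add_mono K)
      also have "\<dots> \<le> (Lf * dist x y) * Bg * K + Bf * (Lg * dist x y) * K"
        using n1 n2 bf(1)[OF y] bg(1)[OF x] K(2) Lf0 Lg0 bf(2) bg(2)
        by (intro add_mono mult_right_mono mult_mono) auto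
      also have "\<dots> = K * (Lf * Bg + Bf * Lg) * dist x y" by (simp add: algebra_simps)
      finally show "dist (prod (f x) (g x)) (prod (f y) (g y)) \<le> K * (Lf * Bg + Bf * Lg) * dist x y" .
    qed (use K(2) Lf0 Lg0 bf(2) bg(2) in auto)
  qed
qed

lemma LB_lin:
  fixes h :: "'b::real_normed_vector \<Rightarrow> 'c::real_normed_vector" and f :: "'a::metric_space \<Rightarrow> 'b"
  assumes h: "bounded_linear h" and f: "LB S f"
  shows "LB S (\<lambda>z. h (f z))"
proof -
  obtain Bf Lf where bf: "\<And>z. z\<in>S \<Longrightarrow> norm (f z) \<le> Bf" "Bf \<ge> 0" and lf: "Lf-lipschitz_on S f"
    by (rule LBE[OF f]) blast
  obtain K where K: "\<And>a. norm (h a) \<le> norm a * K" "K > 0"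
    using bounded_linear.pos_bounded[OF h] by blast
  have Lf0: "Lf \<ge> 0" using lf lipschitz_on_nonneg by blast
  show ?thesis
  proof (rule LBI)
    fix z assume z: "z \<in> S"
    show "norm (h (f z)) \<le> Bf * K" using K(1)[of "f z"] bf(1)[OF z] K(2)
      by (meson mult_right_mono less_imp_le order_trans)
  next
    show "(Lf * K)-lipschitz_on S (\<lambda>z. h (f z))"
    proof (rule lipschitz_onI)
      fix x y assume x: "x \<in> S" and y: "y \<in> S"
      have "dist (h (f x)) (h (f y)) = norm (h (f x - f y))"
        by (simp add: dist_norm linear_diff[OF bounded_linear.linear[OF h]])
      also have "\<dots> \<le> norm (f x - f y) * K" by (rule K)
      also have "\<dots> \<le> (Lf * dist x y) * K"
        using lipschitz_onD[OF lf x y] K(2) by (intro mult_right_mono) (auto simp: dist_norm)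
      finally show "dist (h (f x)) (h (f y)) \<le> Lf * K * dist x y" by (simp add: mult_ac)
    qed (use K(2) Lf0 in auto)
  qed
qed

lemma LB_scaleR: "LB S f \<Longrightarrow> LB S g \<Longrightarrow> LB S (\<lambda>z. f z *\<^sub>R g z)"
  by (rule LB_bilin[OF bounded_bilinear_scaleR])

lemma LB_mult: "LB S f \<Longrightarrow> LB S g \<Longrightarrow> LB S (\<lambda>z. (f z :: real) * g z)"
  by (rule LB_bilin[OF bounded_bilinear_mult])

lemma LB_inner: "LB S f \<Longrightarrow> LB S g \<Longrightarrow> LB S (\<lambda>z. f z \<bullet> g z)"
  by (rule LB_bilin[OF bounded_bilinear_inner])


lemma LB_sum: "finite I \<Longrightarrow> (\<And>i. i \<in> I \<Longrightarrow> LB S (f i)) \<Longrightarrow> LB S (\<lambda>z. \<Sum>i\<in>I. f i z)"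
proof (induction I rule: finite_induct)
  case empty then show ?case by (simp add: LB_const)
next
  case (insert i I)
  then show ?case by (simp add: LB_add)
qed

lemma vec_expand: "(x::real^'n) = (\<Sum>k\<in>UNIV. x$k *\<^sub>R axis k 1)"
  using basis_expansion[of x] by (simp add: scalar_mult_eq_scaleR)

lemma LB_vec:
  fixes f :: "'n::finite \<Rightarrow> 'a::metric_space \<Rightarrow> real"
  assumes "\<And>k. LB S (f k)"
  shows "LB S (\<lambda>z. \<chi> k. f k z)"
proof -
  have "LB S (\<lambda>z. \<Sum>k\<in>UNIV. f k z *\<^sub>R (axis k 1 :: real^'n))"
    by (intro LB_sum LB_scaleR assms LB_const) auto
  then show ?thesis
    by (rule LB_cong) (rule vec_expand[symmetric, of "\<chi> k. f k _", simplified])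
qed

lemma LB_nth: "LB S f \<Longrightarrow> LB S (\<lambda>z. f z $ i)"
  by (rule LB_lin[OF bounded_linear_vec_nth])

lemma mv_bound: "norm ((A::real^'n^'m) *v x) \<le> norm A * norm x * real CARD('m)"
proof -
  have "norm (A *v x) \<le> (\<Sum>i\<in>UNIV. \<bar>(A *v x) $ i\<bar>)" by (rule norm_le_l1_cart)
  also have "\<dots> = (\<Sum>i\<in>UNIV. \<bar>A $ i \<bullet> x\<bar>)"
    by (simp add: matrix_vector_mult_def inner_vec_def)
  also have "\<dots> \<le> (\<Sum>i\<in>(UNIV::'m set). norm A * norm x)"
  proof (rule sum_mono)
    fix i
    have "\<bar>A $ i \<bullet> x\<bar> \<le> norm (A $ i) * norm x" by (rule Cauchy_Schwarz_ineq2)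
    also have "\<dots> \<le> norm A * norm x" by (rule mult_right_mono[OF Finite_Cartesian_Product.norm_nth_le]) simp
    finally show "\<bar>A $ i \<bullet> x\<bar> \<le> norm A * norm x" .
  qed
  finally show ?thesis by (simp add: mult_ac)
qed

lemma bb_mv: "bounded_bilinear (\<lambda>(A::real^'n^'m) x. A *v x)"
proof
  fix a a' :: "real^'n^'m" and b b' :: "real^'n" and r :: real
  show "(a + a') *v b = a *v b + a' *v b" by (simp add: matrix_vector_mult_add_rdistrib)
  show "a *v (b + b') = a *v b + a *v b'" by (simp add: matrix_vector_right_distrib)
  show "(r *\<^sub>R a) *v b = r *\<^sub>R (a *v b)"
    by (simp add: vec_eq_iff matrix_vector_mult_def sum_distrib_left mult_ac)
  show "a *v (r *\<^sub>R b) = r *\<^sub>R (a *v b)"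
    by (simp add: vec_eq_iff matrix_vector_mult_def sum_distrib_left mult_ac)
next
  show "\<exists>K. \<forall>a b. norm ((a::real^'n^'m) *v b) \<le> norm a * norm b * K"
    using mv_bound by blast
qed

lemma LB_mv: "LB S f \<Longrightarrow> LB S g \<Longrightarrow> LB S (\<lambda>z. (f z :: real^'n^'m) *v g z)"
  by (rule LB_bilin[OF bb_mv])

lemma LB_pair:
  assumes "LB S f" "LB S g" shows "LB S (\<lambda>z. (f z, g z))"
proof -
  obtain Bf Lf where bf: "\<And>z. z\<in>S \<Longrightarrow> norm (f z) \<le> Bf" and lf: "Lf-lipschitz_on S f"
    by (rule LBE[OF assms(1)]) blast
  obtain Bg Lg where bg: "\<And>z. z\<in>S \<Longrightarrow> norm (g z) \<le> Bg" and lg: "Lg-lipschitz_on S g"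
    by (rule LBE[OF assms(2)]) blast
  show ?thesis
  proof (rule LBI[OF _ lipschitz_on_Pair[OF lf lg]])
    fix z assume "z \<in> S"
    then show "norm (f z, g z) \<le> Bf + Bg"
      using bf bg norm_Pair_le[of "f z" "g z"] by (meson add_mono order_trans)
  qed
qed

lemma LB_fst_comp:
  assumes "LB P f" "\<And>z. z \<in> S \<Longrightarrow> fst z \<in> P"
  shows "LB S (\<lambda>z. f (fst z))"
proof -
  obtain B L where b: "\<And>z. z\<in>P \<Longrightarrow> norm (f z) \<le> B" and l: "L-lipschitz_on P f"
    by (rule LBE[OF assms(1)]) blast
  have L0: "L \<ge> 0" using l lipschitz_on_nonneg by blast
  show ?thesis
  proof (rule LBI)
    show "norm (f (fst z)) \<le> B" if "z \<in> S" for z using b assms(2) that by blast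
    show "L-lipschitz_on S (\<lambda>z. f (fst z))"
    proof (rule lipschitz_onI)
      fix x y assume "x \<in> S" "y \<in> S"
      then have "dist (f (fst x)) (f (fst y)) \<le> L * dist (fst x) (fst y)"
        using lipschitz_onD[OF l] assms(2) by blast
      also have "\<dots> \<le> L * dist x y" using L0 dist_fst_le[of x y] by (intro mult_left_mono) auto
      finally show "dist (f (fst x)) (f (fst y)) \<le> L * dist x y" .
    qed (rule L0)
  qed
qed

lemma LB_snd:
  assumes "\<And>z. z \<in> S \<Longrightarrow> norm (snd z) \<le> B"
  shows "LB S (\<lambda>z. snd z)"
  unfolding LB_def
proof (intro conjI exI ballI)
  show "norm (snd z) \<le> B" if "z \<in> S" for z using assms that .
  show "1-lipschitz_on S snd" by (rule lipschitz_onI) (simp_all add: dist_snd_le)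
qed

lemma iter_dd_append: "iter_dd vs (iter_dd [w] f) = iter_dd (vs @ [w]) f"
  by (induction vs) auto

lemma smooth_dd: "smooth_on U f \<Longrightarrow> smooth_on U (iter_dd [w] f)"
  unfolding smooth_on_def iter_dd_append by blast

lemma smooth_differentiable: "smooth_on U f \<Longrightarrow> p \<in> U \<Longrightarrow> f differentiable (at p)"
  unfolding smooth_on_def using iter_dd.simps(1) by metis

definition pd :: "('a::real_normed_vector \<Rightarrow> 'b::real_normed_vector) \<Rightarrow> 'a \<Rightarrow> 'a \<Rightarrow> 'b" where
  "pd f w x = frechet_derivative f (at x) w"

lemma pd_iter: "pd f w = iter_dd [w] f"
  by (auto simp: pd_def)

lemma smooth_pd: "smooth_on U f \<Longrightarrow> smooth_on U (pd f w)"
  unfolding pd_iter by (rule smooth_dd)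

lemma dd_linear: "f differentiable (at x) \<Longrightarrow> linear (frechet_derivative f (at x))"
  using frechet_derivative_works has_derivative_linear by blast

lemma dd_expand:
  fixes f :: "real^'n \<Rightarrow> 'b::real_normed_vector"
  assumes "f differentiable (at x)"
  shows "frechet_derivative f (at x) w = (\<Sum>k\<in>UNIV. w$k *\<^sub>R pd f (axis k 1) x)"
proof -
  have lin: "linear (frechet_derivative f (at x))" using dd_linear[OF assms] .
  have "frechet_derivative f (at x) w = frechet_derivative f (at x) (\<Sum>k\<in>UNIV. w$k *\<^sub>R axis k 1)"
    using vec_expand[of w] by simp
  also have "\<dots> = (\<Sum>k\<in>UNIV. w$k *\<^sub>R frechet_derivative f (at x) (axis k 1))"
    by (simp add: linear_sum[OF lin] linear_scale[OF lin])
  finally show ?thesis by (simp add: pd_def)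
qed

lemma smooth_LB:
  fixes f :: "real^'n \<Rightarrow> 'b::real_normed_vector"
  assumes sm: "smooth_on U f" and sub: "cball p r \<subseteq> U"
  shows "LB (cball p r) f"
proof -
  have dif: "f differentiable (at x)" if "x \<in> cball p r" for x
    using smooth_differentiable[OF sm] sub that by blast
  have cont: "continuous_on (cball p r) f"
    using dif differentiable_imp_continuous_within continuous_at_imp_continuous_on by blast
  obtain B where B: "\<And>x. x \<in> cball p r \<Longrightarrow> norm (f x) \<le> B"
    using compact_imp_bounded[OF compact_continuous_image[OF cont compact_cball]]
    unfolding bounded_iff by blast
  define s where "s x = (\<Sum>k\<in>UNIV. norm (pd f (axis k 1) x))" for x
  have pdc: "continuous_on (cball p r) (pd f (axis k 1))" for k
    using smooth_differentiable[OF smooth_pd[OF sm]] sub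
    by (meson continuous_at_imp_continuous_on differentiable_imp_continuous_within subsetD)
  have sc: "continuous_on (cball p r) s" unfolding s_def
    by (intro continuous_intros pdc)
  obtain C1 where C1: "\<And>x. x \<in> cball p r \<Longrightarrow> norm (s x) \<le> C1"
    using compact_imp_bounded[OF compact_continuous_image[OF sc compact_cball]]
    unfolding bounded_iff by blast
  define C where "C = max C1 0"
  have C: "norm (s x) \<le> C" if "x \<in> cball p r" for x
    unfolding C_def using C1[OF that] by linarith
  have C0: "C \<ge> 0" by (simp add: C_def)
  have s0: "s x \<ge> 0" for x unfolding s_def by (intro sum_nonneg) auto
  have on: "onorm (frechet_derivative f (at x)) \<le> C" if x: "x \<in> cball p r" for x
  proof (rule onorm_le)
    fix y
    have "norm (frechet_derivative f (at x) y) = norm (\<Sum>k\<in>UNIV. y$k *\<^sub>R pd f (axis k 1) x)"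
      by (simp add: dd_expand[OF dif[OF x]])
    also have "\<dots> \<le> (\<Sum>k\<in>UNIV. norm (y$k *\<^sub>R pd f (axis k 1) x))" by (rule norm_sum)
    also have "\<dots> \<le> (\<Sum>k\<in>UNIV. norm y * norm (pd f (axis k 1) x))"
      by (intro sum_mono) (simp add: mult_right_mono component_le_norm_cart)
    also have "\<dots> = norm y * s x" by (simp add: s_def sum_distrib_left)
    also have "\<dots> \<le> C * norm y"
    proof -
      have sC: "s x \<le> C" using C[OF x] s0[of x] by simp
      show ?thesis using mult_right_mono[OF sC norm_ge_zero[of y]] by (simp add: mult.commute)
    qed
    finally show "norm (frechet_derivative f (at x) y) \<le> C * norm y" .
  qed
  show ?thesis
  proof (rule LBI[OF B])
    show "C-lipschitz_on (cball p r) f"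
    proof (rule lipschitz_onI)
      fix x y assume x: "x \<in> cball p r" and y: "y \<in> cball p r"
      have "norm (f x - f y) \<le> C * norm (x - y)"
        by (rule differentiable_bound[OF convex_cball _ on x y])
          (use dif in \<open>auto intro: has_derivative_at_withinI simp: frechet_derivative_works\<close>)
      then show "dist (f x) (f y) \<le> C * dist x y" by (simp add: dist_norm)
    qed (rule C0)
  qed
qed



lemma inv_props:
  assumes "invertible (A::real^'n^'n)"
  shows "A ** matrix_inv A = mat 1" "matrix_inv A ** A = mat 1"
  using assms unfolding invertible_def matrix_inv_def by (metis (mono_tags, lifting) someI_ex)+

lemma inv_mv:
  assumes "invertible (A::real^'n^'n)"
  shows "matrix_inv A *v (A *v y) = y" "A *v (matrix_inv A *v y) = y"
  using inv_props[OF assms] by (simp_all add: matrix_vector_mul_assoc)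

lemma posdef_invertible:
  assumes "\<forall>X. X \<noteq> 0 \<longrightarrow> gip g p X X > 0"
  shows "invertible (g p)"
proof -
  have "\<forall>x. g p *v x = 0 \<longrightarrow> x = 0"
    using assms unfolding gip_def by (metis inner_zero_right less_irrefl)
  then show ?thesis
    using matrix_left_invertible_ker invertible_left_inverse by blast
qed

lemma mat_col: "((C::real^'n^'m) *v axis j 1) $ i = C $ i $ j"
  by (simp add: matrix_vector_mult_def axis_def if_distrib cong: if_cong)

lemma norm_le_rows: "norm (x::'a::real_normed_vector^'m) \<le> (\<Sum>i\<in>UNIV. norm (x$i))"
  unfolding norm_vec_def by (rule L2_set_le_sum) simp

lemma mat_norm_cols: "norm (C::real^'n^'m) \<le> real CARD('m) * (\<Sum>j\<in>UNIV. norm (C *v axis j 1))"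
proof -
  have "norm C \<le> (\<Sum>i\<in>UNIV. norm (C$i))" by (rule norm_le_rows)
  also have "\<dots> \<le> (\<Sum>i\<in>(UNIV::'m set). (\<Sum>j\<in>UNIV. norm (C *v axis j 1)))"
  proof (rule sum_mono)
    fix i
    have "norm (C$i) \<le> (\<Sum>j\<in>UNIV. \<bar>C$i$j\<bar>)" by (rule norm_le_l1_cart)
    also have "\<dots> \<le> (\<Sum>j\<in>UNIV. norm (C *v axis j 1))"
      by (rule sum_mono) (metis mat_col component_le_norm_cart)
    finally show "norm (C$i) \<le> (\<Sum>j\<in>UNIV. norm (C *v axis j 1))" .
  qed
  also have "\<dots> = real CARD('m) * (\<Sum>j\<in>UNIV. norm (C *v axis j 1))" by simp
  finally show ?thesis .
qed

lemma mv_diff_left: "((A::real^'n^'m) - B) *v x = A *v x - B *v x"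
  by (rule bounded_bilinear.diff_left[OF bb_mv])

lemma mv_diff_right: "(A::real^'n^'m) *v (x - y) = A *v x - A *v y"
  by (rule bounded_bilinear.diff_right[OF bb_mv])

lemma inv_LB:
  fixes g :: "real^'n \<Rightarrow> real^'n^'n"
  assumes sm: "smooth_on U g" and U: "open U" and p: "p \<in> U"
    and inv: "\<And>x. x \<in> U \<Longrightarrow> invertible (g x)"
  shows "\<exists>r>0. cball p r \<subseteq> U \<and> LB (cball p r) (\<lambda>x. matrix_inv (g x))"
proof -
  define c where "c = real CARD('n)"
  have c1: "c \<ge> 1" by (simp add: c_def Suc_le_eq)
  define Mp where "Mp = matrix_inv (g p)"
  define K0 where "K0 = norm Mp * c + 1"
  have "norm Mp * c \<ge> 0" using c1 by simp
  then have K0: "K0 > 0" unfolding K0_def by linarith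
  have Mp_b: "norm (Mp *v w) \<le> K0 * norm w" for w
  proof -
    have "norm (Mp *v w) \<le> norm Mp * norm w * c" using mv_bound[of Mp w] by (simp add: c_def)
    also have "\<dots> \<le> K0 * norm w" by (simp add: K0_def algebra_simps)
    finally show ?thesis .
  qed
  obtain r0 where r0: "r0 > 0" "cball p r0 \<subseteq> U" using U p open_contains_cball by blast
  have "continuous (at p) g"
    using smooth_differentiable[OF sm p] differentiable_imp_continuous_within by blast
  moreover have "1 / (2 * K0 * c) > 0" using K0 c1 by simp
  ultimately obtain d where d: "d > 0" "\<And>x. dist x p < d \<Longrightarrow> dist (g x) (g p) < 1 / (2 * K0 * c)"
    unfolding continuous_at_eps_delta by blast
  define r where "r = min r0 (d/2)"
  have r: "r > 0" "cball p r \<subseteq> U" using r0 d by (auto simp: r_def)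
  have close: "norm (g p - g x) \<le> 1 / (2 * K0 * c)" if "x \<in> cball p r" for x
    using d(2)[of x] that d(1) by (auto simp: r_def dist_norm norm_minus_commute)
  have LBg: "LB (cball p r) g" by (rule smooth_LB[OF sm r(2)])
  then obtain Lg where Lg: "Lg-lipschitz_on (cball p r) g" by (rule LBE) blast
  have Lg0: "Lg \<ge> 0" using Lg lipschitz_on_nonneg by blast
  have Mb: "norm (matrix_inv (g x) *v w) \<le> 2 * K0 * norm w" if x: "x \<in> cball p r" for x w
  proof -
    define Mx where "Mx = matrix_inv (g x)"
    have ix: "invertible (g x)" using inv r(2) x by blast
    have ip: "invertible (g p)" using inv p by blast
    have idm: "Mx *v w = Mp *v w + Mp *v ((g p - g x) *v (Mx *v w))"
      by (simp add: mv_diff_left mv_diff_right Mp_def Mx_def inv_mv[OF ix] inv_mv[OF ip])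
    have "norm ((g p - g x) *v (Mx *v w)) \<le> norm (g p - g x) * norm (Mx *v w) * c"
      using mv_bound by (simp add: c_def)
    also have "\<dots> \<le> (1 / (2 * K0 * c)) * norm (Mx *v w) * c"
      using close[OF x] c1 by (intro mult_right_mono) auto
    also have "\<dots> = norm (Mx *v w) / (2 * K0)" using c1 by (simp add: field_simps)
    finally have n1: "norm ((g p - g x) *v (Mx *v w)) \<le> norm (Mx *v w) / (2 * K0)" .
    have e1: "norm (Mx *v w) = norm (Mp *v w + Mp *v ((g p - g x) *v (Mx *v w)))"
      by (rule arg_cong[OF idm])
    have "norm (Mp *v w + Mp *v ((g p - g x) *v (Mx *v w))) \<le> K0 * norm w + K0 * (norm (Mx *v w) / (2 * K0))"
      by (rule order_trans[OF norm_triangle_ineq], rule add_mono[OF Mp_b],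
          rule order_trans[OF Mp_b], rule mult_left_mono[OF n1]) (use K0 in auto)
    also have "\<dots> = K0 * norm w + norm (Mx *v w) / 2" using K0 by simp
    finally have f1: "norm (Mp *v w + Mp *v ((g p - g x) *v (Mx *v w))) \<le> K0 * norm w + norm (Mx *v w) / 2" .
    have "norm (Mx *v w) \<le> 2 * (K0 * norm w)" using f1 e1 by linarith
    then show ?thesis unfolding Mx_def by (simp add: mult_ac)
  qed
  have Mnorm: "norm (matrix_inv (g x)) \<le> c * (c * (2 * K0))" if x: "x \<in> cball p r" for x
  proof -
    have "norm (matrix_inv (g x)) \<le> c * (\<Sum>j\<in>UNIV. norm (matrix_inv (g x) *v axis j 1))"
      using mat_norm_cols by (simp add: c_def)
    also have "\<dots> \<le> c * (\<Sum>j\<in>(UNIV::'n set). 2 * K0)"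
      using Mb[OF x, of "axis _ 1"] c1 by (intro mult_left_mono sum_mono) auto
    also have "\<dots> = c * (c * (2 * K0))" by (simp add: c_def)
    finally show ?thesis .
  qed
  show ?thesis
  proof (intro exI conjI)
    show "r > 0" "cball p r \<subseteq> U" by (rule r)+
    show "LB (cball p r) (\<lambda>x. matrix_inv (g x))"
    proof (rule LBI[OF Mnorm])
      show "(c * (c * (2 * K0 * (2 * K0 * Lg * c))))-lipschitz_on (cball p r) (\<lambda>x. matrix_inv (g x))"
      proof (rule lipschitz_onI)
        fix x y assume x: "x \<in> cball p r" and y: "y \<in> cball p r"
        have ix: "invertible (g x)" using inv r(2) x by blast
        have iy: "invertible (g y)" using inv r(2) y by blast
        have col: "norm ((matrix_inv (g x) - matrix_inv (g y)) *v axis j 1) \<le> 2 * K0 * (2 * K0 * Lg * c) * dist x y" for j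
        proof -
          have idc: "(matrix_inv (g x) - matrix_inv (g y)) *v axis j 1
              = matrix_inv (g x) *v ((g y - g x) *v (matrix_inv (g y) *v axis j 1))"
            by (simp add: mv_diff_left mv_diff_right inv_mv[OF ix] inv_mv[OF iy])
          have gd: "norm (g y - g x) \<le> Lg * dist x y"
            using lipschitz_onD[OF Lg y x] by (simp add: dist_norm norm_minus_commute)
          have "norm ((g y - g x) *v (matrix_inv (g y) *v axis j 1)) \<le> norm (g y - g x) * norm (matrix_inv (g y) *v axis j 1) * c"
            using mv_bound by (simp add: c_def)
          also have "\<dots> \<le> (Lg * dist x y) * (2 * K0) * c"
            using gd Mb[OF y, of "axis j 1"] c1 Lg0 by (intro mult_right_mono mult_mono) auto
          finally have "norm ((g y - g x) *v (matrix_inv (g y) *v axis j 1)) \<le> (Lg * dist x y) * (2 * K0) * c" .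
          then have "norm (matrix_inv (g x) *v ((g y - g x) *v (matrix_inv (g y) *v axis j 1))) \<le> 2 * K0 * ((Lg * dist x y) * (2 * K0) * c)"
            using Mb[OF x] K0 by (meson order_trans mult_left_mono less_imp_le zero_less_mult_iff zero_less_numeral)
          then show ?thesis unfolding idc by (simp add: algebra_simps)
        qed
        have "dist (matrix_inv (g x)) (matrix_inv (g y)) \<le> c * (\<Sum>j\<in>UNIV. norm ((matrix_inv (g x) - matrix_inv (g y)) *v axis j 1))"
          unfolding dist_norm using mat_norm_cols by (simp add: c_def)
        also have "\<dots> \<le> c * (\<Sum>j\<in>(UNIV::'n set). 2 * K0 * (2 * K0 * Lg * c) * dist x y)"
          using col c1 by (intro mult_left_mono sum_mono) auto
        also have "\<dots> = c * (c * (2 * K0 * (2 * K0 * Lg * c))) * dist x y" by (simp add: c_def)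
        finally show "dist (matrix_inv (g x)) (matrix_inv (g y)) \<le> c * (c * (2 * K0 * (2 * K0 * Lg * c))) * dist x y" .
      qed (use c1 K0 Lg0 in auto)
    qed
  qed
qed



context
  fixes g J :: "real^'n \<Rightarrow> real^'n^'n" and S :: "((real^'n) \<times> (real^'n)) set"
  assumes dg: "\<And>z. z \<in> S \<Longrightarrow> g differentiable (at (fst z))"
    and dJ: "\<And>z. z \<in> S \<Longrightarrow> J differentiable (at (fst z))"
    and Lg: "LB S (\<lambda>z. g (fst z))" and LJ: "LB S (\<lambda>z. J (fst z))"
    and Lpg: "\<And>w. LB S (\<lambda>z. pd g w (fst z))" and LpJ: "\<And>w. LB S (\<lambda>z. pd J w (fst z))"
    and LM: "LB S (\<lambda>z. matrix_inv (g (fst z)))"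
begin

lemma LB_dg: "LB S Xf \<Longrightarrow> LB S (\<lambda>z. frechet_derivative g (at (fst z)) (Xf z))"
proof -
  assume X: "LB S Xf"
  have "LB S (\<lambda>z. \<Sum>k\<in>UNIV. Xf z $ k *\<^sub>R pd g (axis k 1) (fst z))"
    by (intro LB_sum LB_scaleR LB_nth X Lpg) auto
  then show ?thesis by (rule LB_cong) (simp add: dd_expand[OF dg])
qed

lemma LB_dJ: "LB S Xf \<Longrightarrow> LB S (\<lambda>z. frechet_derivative J (at (fst z)) (Xf z))"
proof -
  assume X: "LB S Xf"
  have "LB S (\<lambda>z. \<Sum>k\<in>UNIV. Xf z $ k *\<^sub>R pd J (axis k 1) (fst z))"
    by (intro LB_sum LB_scaleR LB_nth X LpJ) auto
  then show ?thesis by (rule LB_cong) (simp add: dd_expand[OF dJ])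
qed

lemma LB_LC: "LB S Xf \<Longrightarrow> LB S Yf \<Longrightarrow> LB S (\<lambda>z. LC g (fst z) (Xf z) (Yf z))"
  unfolding LC_def
  by (intro LB_mv LM LB_vec LB_mult LB_add LB_diff LB_inner LB_dg LB_const)

lemma LB_covJ: "LB S Xf \<Longrightarrow> LB S Yf \<Longrightarrow> LB S (\<lambda>z. covJ (LC g) J (fst z) (Xf z) (Yf z))"
  unfolding covJ_def
  by (intro LB_mv LJ LB_add LB_diff LB_LC LB_dJ)

lemma LB_Bform: "LB S Yf \<Longrightarrow> LB S (\<lambda>z. Bform g J (fst z) (Yf z))"
  unfolding Bform_def
  by (intro LB_mult LB_const LB_sum LB_nth LB_mv LJ LB_covJ) auto

lemma LB_Bsharp: "LB S (\<lambda>z. Bsharp g J (fst z))"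
  unfolding Bsharp_def
  by (intro LB_mv LM LB_vec LB_Bform LB_const)

lemma LB_gip: "LB S Xf \<Longrightarrow> LB S Yf \<Longrightarrow> LB S (\<lambda>z. gip g (fst z) (Xf z) (Yf z))"
  unfolding gip_def
  by (intro LB_inner LB_mv Lg)

lemma LB_Gamc: "LB S Xf \<Longrightarrow> LB S Yf \<Longrightarrow> LB S (\<lambda>z. Gam_c g J (fst z) (Xf z) (Yf z))"
  unfolding Gam_c_def
  by (intro LB_add LB_diff LB_LC LB_scaleR LB_Bform LB_gip LB_Bsharp)

end



lemma mv_vec_add: "(M::real^'n^'m) *v (\<chi> k. a k) + M *v (\<chi> k. b k) = M *v (\<chi> k. a k + b k)"
proof -
  have "(\<chi> k. a k) + (\<chi> k. b k) = (\<chi> k. a k + b k)" by (simp add: vec_eq_iff)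
  then show ?thesis by (metis matrix_vector_right_distrib)
qed

context
  fixes g J :: "real^'n \<Rightarrow> real^'n^'n" and p :: "real^'n"
  assumes dg: "g differentiable (at p)" and dJ: "J differentiable (at p)"
begin

lemma LC_add1: "LC g p (X1 + X2) Y = LC g p X1 Y + LC g p X2 Y"
  unfolding LC_def mv_vec_add
  by (intro arg_cong[where f="(*v) (matrix_inv (g p))"])
    (simp add: vec_eq_iff linear_add[OF dd_linear[OF dg]] inner_add_left inner_add_right
      matrix_vector_mult_add_rdistrib matrix_vector_right_distrib algebra_simps)

lemma LC_add2: "LC g p X (Y1 + Y2) = LC g p X Y1 + LC g p X Y2"
  unfolding LC_def mv_vec_add
  by (intro arg_cong[where f="(*v) (matrix_inv (g p))"])
    (simp add: vec_eq_iff linear_add[OF dd_linear[OF dg]] inner_add_left inner_add_right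
      matrix_vector_mult_add_rdistrib matrix_vector_right_distrib algebra_simps)

lemma covJLC_add2: "covJ (LC g) J p Z (Y1 + Y2) = covJ (LC g) J p Z Y1 + covJ (LC g) J p Z Y2"
  unfolding covJ_def by (simp add: LC_add2 matrix_vector_right_distrib algebra_simps)

lemma Bform_add: "Bform g J p (Y1 + Y2) = Bform g J p Y1 + Bform g J p Y2"
proof -
  have "(\<Sum>c\<in>UNIV. (J p *v covJ (LC g) J p (axis c 1) (Y1 + Y2)) $ c)
      = (\<Sum>c\<in>UNIV. (J p *v covJ (LC g) J p (axis c 1) Y1) $ c) + (\<Sum>c\<in>UNIV. (J p *v covJ (LC g) J p (axis c 1) Y2) $ c)"
    by (simp add: covJLC_add2 matrix_vector_right_distrib sum.distrib)
  then show ?thesis unfolding Bform_def by (simp add: distrib_left)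
qed

lemma gip_add1: "gip g p (X1 + X2) Y = gip g p X1 Y + gip g p X2 Y"
  by (simp add: gip_def inner_add_left)

lemma gip_add2: "gip g p X (Y1 + Y2) = gip g p X Y1 + gip g p X Y2"
  by (simp add: gip_def inner_add_right matrix_vector_right_distrib)

lemma Gamc_add1: "Gam_c g J p (X1 + X2) Y = Gam_c g J p X1 Y + Gam_c g J p X2 Y"
  unfolding Gam_c_def by (simp add: LC_add1 Bform_add gip_add1 algebra_simps)

lemma Gamc_add2: "Gam_c g J p X (Y1 + Y2) = Gam_c g J p X Y1 + Gam_c g J p X Y2"
  unfolding Gam_c_def by (simp add: LC_add2 Bform_add gip_add2 algebra_simps)

lemma covJc_add1: "covJ (Gam_c g J) J p (X1 + X2) Y = covJ (Gam_c g J) J p X1 Y + covJ (Gam_c g J) J p X2 Y"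
  unfolding covJ_def
  by (simp add: Gamc_add1 linear_add[OF dd_linear[OF dJ]] matrix_vector_mult_add_rdistrib
      matrix_vector_right_distrib algebra_simps)

lemma covJc_add2: "covJ (Gam_c g J) J p X (Y1 + Y2) = covJ (Gam_c g J) J p X Y1 + covJ (Gam_c g J) J p X Y2"
  unfolding covJ_def
  by (simp add: Gamc_add2 matrix_vector_right_distrib algebra_simps)

lemma polar:
  assumes "\<And>X. covJ (Gam_c g J) J p X X = 0"
  shows "covJ (Gam_c g J) J p X Y + covJ (Gam_c g J) J p Y X = 0"
proof -
  have "covJ (Gam_c g J) J p (X + Y) (X + Y) = covJ (Gam_c g J) J p X X + covJ (Gam_c g J) J p X Y
     + (covJ (Gam_c g J) J p Y X + covJ (Gam_c g J) J p Y Y)"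
    by (simp add: covJc_add1 covJc_add2)
  then show ?thesis using assms by simp
qed

end



theorem proposition4p14:
  fixes U :: "(real^'n) set" and g J :: "real^'n \<Rightarrow> real^'n^'n"
  assumes "CARD('n) \<ge> 4"
    and "conf_almost_hermitian U g J"
  shows "(nearly_kaehler_weyl g J U \<longleftrightarrow> same_geodesics (Gam_c g J) (Gam_gc g J) U)
    \<and> (nearly_kaehler_weyl g J U \<longrightarrow> proj_equiv (Gam_c g J) (Gam_gc g J) U)"
proof -
  from assms(2) have U: "open U" and smg: "smooth_on U g" and smJ: "smooth_on U J"
    and pos: "\<And>p. p \<in> U \<Longrightarrow> \<forall>X. X \<noteq> 0 \<longrightarrow> gip g p X X > 0"
    and JJ: "\<And>p. p \<in> U \<Longrightarrow> J p ** J p = - mat 1"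
    unfolding conf_almost_hermitian_def by auto
  have dg: "\<And>p. p \<in> U \<Longrightarrow> g differentiable (at p)" using smooth_differentiable[OF smg] .
  have dJ: "\<And>p. p \<in> U \<Longrightarrow> J differentiable (at p)" using smooth_differentiable[OF smJ] .
  have inv: "\<And>x. x \<in> U \<Longrightarrow> invertible (g x)" using pos posdef_invertible by blast
  have Gc_eq: "Gam_gc g J p v v = Gam_c g J p v v - (1/2) *\<^sub>R (J p *v covJ (Gam_c g J) J p v v)" for p v
    by (simp add: Gam_gc_def Gc_def)
  have fwd: "same_geodesics (Gam_c g J) (Gam_gc g J) U" if nk: "nearly_kaehler_weyl g J U"
  proof -
    have eqp: "Gam_gc g J p v v = Gam_c g J p v v" if "p \<in> U" for p v
      using nk that unfolding nearly_kaehler_weyl_def Gc_eq by simp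
    show ?thesis unfolding same_geodesics_def geodesic_def
      by (auto simp: eqp)
  qed
  have bwd: "nearly_kaehler_weyl g J U" if sg: "same_geodesics (Gam_c g J) (Gam_gc g J) U"
    unfolding nearly_kaehler_weyl_def
  proof (intro ballI allI)
    fix p X :: "real^'n" assume p: "p \<in> U"
    obtain r where r: "r > 0" "cball p r \<subseteq> U" "LB (cball p r) (\<lambda>x. matrix_inv (g x))"
      using inv_LB[OF smg U p inv] by blast
    define S where "S = cball (p, X) r"
    have fstS: "fst z \<in> cball p r" if "z \<in> S" for z :: "(real^'n) \<times> (real^'n)"
      using that dist_fst_le[of "(p,X)" z] by (auto simp: S_def)
    have fstU: "fst z \<in> U" if "z \<in> S" for z using fstS[OF that] r(2) by blast
    have sndS: "norm (snd z) \<le> norm X + r" if "z \<in> S" for z :: "(real^'n) \<times> (real^'n)"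
    proof -
      have "norm (snd z) \<le> norm X + dist X (snd z)"
        by (metis dist_norm norm_minus_commute norm_triangle_sub)
      also have "dist X (snd z) \<le> dist (p, X) z" using dist_snd_le[of "(p,X)" z] by simp
      finally show ?thesis using that by (auto simp: S_def)
    qed
    have LS: "LB S (\<lambda>z. Gam_c g J (fst z) (snd z) (snd z))"
    proof (rule LB_Gamc)
      show "g differentiable (at (fst z))" if "z \<in> S" for z using dg fstU that by blast
      show "J differentiable (at (fst z))" if "z \<in> S" for z using dJ fstU that by blast
      show "LB S (\<lambda>z. g (fst z))" by (rule LB_fst_comp[OF smooth_LB[OF smg r(2)] fstS])
      show "LB S (\<lambda>z. J (fst z))" by (rule LB_fst_comp[OF smooth_LB[OF smJ r(2)] fstS])
      show "LB S (\<lambda>z. pd g w (fst z))" for w by (rule LB_fst_comp[OF smooth_LB[OF smooth_pd[OF smg] r(2)] fstS])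
      show "LB S (\<lambda>z. pd J w (fst z))" for w by (rule LB_fst_comp[OF smooth_LB[OF smooth_pd[OF smJ] r(2)] fstS])
      show "LB S (\<lambda>z. matrix_inv (g (fst z)))" by (rule LB_fst_comp[OF r(3) fstS])
      show "LB S snd" by (rule LB_snd[OF sndS])
      show "LB S snd" by (rule LB_snd[OF sndS])
    qed
    define H where "H z = (snd z, - Gam_c g J (fst z) (snd z) (snd z))" for z
    have LH: "LB S H" unfolding H_def by (intro LB_pair LB_minus LB_snd[OF sndS] LS)
    obtain B L where B: "\<And>z. z \<in> S \<Longrightarrow> norm (H z) \<le> B" and L: "L-lipschitz_on S H"
      by (rule LBE[OF LH]) blast
    obtain e z where e: "e > 0" and z0: "z 0 = (p, X)"
      and zt: "\<forall>t\<in>{-e<..<e}. z t \<in> S \<and> (z has_vector_derivative H (z t)) (at t)"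
      using ode_exists[OF r(1), of L "(p, X)" H B] L B unfolding S_def by blast
    define I where "I = {-e<..<e}"
    define \<gamma> where "\<gamma> t = fst (z t)" for t
    have Iopen: "open I" by (simp add: I_def)
    have Iint: "is_interval I" unfolding I_def by (simp add: is_interval_convex_1)
    have zd: "(z has_vector_derivative H (z t)) (at t)" if "t \<in> I" for t using zt that I_def by blast
    have gd: "(\<gamma> has_vector_derivative snd (z t)) (at t)" if t: "t \<in> I" for t
      using bounded_linear.has_vector_derivative[OF bounded_linear_fst zd[OF t]]
      by (simp add: \<gamma>_def[abs_def] H_def)
    have vd: "vector_derivative \<gamma> (at t) = snd (z t)" if t: "t \<in> I" for t
      using vector_derivative_at[OF gd[OF t]] .
    have sd: "((\<lambda>s. snd (z s)) has_vector_derivative - Gam_c g J (\<gamma> t) (snd (z t)) (snd (z t))) (at t)"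
      if t: "t \<in> I" for t
      using bounded_linear.has_vector_derivative[OF bounded_linear_snd zd[OF t]]
      by (simp add: \<gamma>_def H_def)
    have vdd: "((\<lambda>s. vector_derivative \<gamma> (at s)) has_vector_derivative - Gam_c g J (\<gamma> t) (snd (z t)) (snd (z t))) (at t)"
      if t: "t \<in> I" for t
      by (rule has_vector_derivative_transform_within_open[OF sd[OF t] Iopen t]) (simp add: vd)
    have vdv: "vector_derivative (\<lambda>s. vector_derivative \<gamma> (at s)) (at t) = - Gam_c g J (\<gamma> t) (snd (z t)) (snd (z t))"
      if t: "t \<in> I" for t
      using vector_derivative_at[OF vdd[OF t]] .
    have geo: "geodesic (Gam_c g J) U I \<gamma>"
      unfolding geodesic_def
    proof (intro ballI conjI)
      fix t assume t: "t \<in> I"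
      show "\<gamma> t \<in> U" using fstU zt t by (auto simp: \<gamma>_def I_def)
      show "\<gamma> differentiable (at t)" using gd[OF t] by (rule differentiableI_vector)
      show "(\<lambda>s. vector_derivative \<gamma> (at s)) differentiable (at t)" using vdd[OF t] by (rule differentiableI_vector)
      show "vector_derivative (\<lambda>s. vector_derivative \<gamma> (at s)) (at t)
          + Gam_c g J (\<gamma> t) (vector_derivative \<gamma> (at t)) (vector_derivative \<gamma> (at t)) = 0"
        using vdv[OF t] vd[OF t] by simp
    qed
    have geo2: "geodesic (Gam_gc g J) U I \<gamma>"
      using sg geo Iopen Iint unfolding same_geodesics_def by blast
    have I0: "0 \<in> I" using e by (simp add: I_def)
    have "vector_derivative (\<lambda>s. vector_derivative \<gamma> (at s)) (at 0)
          + Gam_gc g J (\<gamma> 0) (vector_derivative \<gamma> (at 0)) (vector_derivative \<gamma> (at 0)) = 0"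
      using geo2 I0 unfolding geodesic_def by blast
    then have "- Gam_c g J p X X + Gam_gc g J p X X = 0"
      using vdv[OF I0] vd[OF I0] z0 by (simp add: \<gamma>_def)
    then have "(1/2) *\<^sub>R (J p *v covJ (Gam_c g J) J p X X) = 0"
      unfolding Gc_eq by simp
    then have j0: "J p *v covJ (Gam_c g J) J p X X = 0" by simp
    have "covJ (Gam_c g J) J p X X = - ((J p ** J p) *v covJ (Gam_c g J) J p X X)"
      using JJ[OF p] by (simp add: bounded_bilinear.minus_left[OF bb_mv])
    also have "\<dots> = 0" using j0 by (simp flip: matrix_vector_mul_assoc)
    finally show "covJ (Gam_c g J) J p X X = 0" .
  qed
  have proj: "proj_equiv (Gam_c g J) (Gam_gc g J) U" if nk: "nearly_kaehler_weyl g J U"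
    unfolding proj_equiv_def
  proof (intro exI[of _ "\<lambda>(p::real^'n) (X::real^'n). 0::real"] ballI conjI allI)
    fix p X Y :: "real^'n" assume p: "p \<in> U"
    show "linear ((\<lambda>(p::real^'n) (X::real^'n). 0::real) p)" by (simp add: linear_iff)
    have pol: "covJ (Gam_c g J) J p X Y + covJ (Gam_c g J) J p Y X = 0"
      by (rule polar[OF dg[OF p] dJ[OF p]]) (use nk p in \<open>auto simp: nearly_kaehler_weyl_def\<close>)
    have "Gam_gc g J p X Y + Gam_gc g J p Y X = Gam_c g J p X Y + Gam_c g J p Y X
        - (1/2) *\<^sub>R (J p *v (covJ (Gam_c g J) J p X Y + covJ (Gam_c g J) J p Y X))"
      by (simp add: Gam_gc_def Gc_def matrix_vector_right_distrib algebra_simps)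
    then show "(1/2) *\<^sub>R (Gam_gc g J p X Y + Gam_gc g J p Y X) - (1/2) *\<^sub>R (Gam_c g J p X Y + Gam_c g J p Y X)
        = (\<lambda>(p::real^'n) (X::real^'n). 0::real) p X *\<^sub>R Y + (\<lambda>(p::real^'n) (X::real^'n). 0::real) p Y *\<^sub>R X"
      using pol by simp
  qed
  show ?thesis using fwd bwd proj by blast
qed


end
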